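(* The following are derivable in $\mathrm{CL}^{\mathrm{FI}}$. (i) For all $C\subseteq N$, $\varphi\in\mathcal{L}_{\mathrm{CL}^{\mathrm{FI}}}$: $\vdash\mathrm{FI}_C(\varphi)\leftrightarrow\mathrm{FI}_C(\neg\varphi)$. (ii) For all $C\subseteq D\subseteq N$ and $\varphi$: $\vdash\mathrm{FI}_D(\varphi)\to\mathrm{FI}_C(\varphi)$. (iii) If $\varphi$ is a formula with $\vdash_{\mathrm{CL}}[N]\varphi\vee[N]\neg\varphi$, then $\vdash_{\mathrm{CL}^{\mathrm{FI}}}\neg\mathrm{FI}_N(\varphi)$. (iv) For all $C\subseteq N$ and formulas $\varphi,\chi,\psi$: if $\vdash_{\mathrm{CL}^{\mathrm{FI}}}\varphi\to\chi$ and $\vdash_{\mathrm{CL}^{\mathrm{FI}}}\chi\to\psi$, then $\vdash_{\mathrm{CL}^{\mathrm{FI}}}(\mathrm{FI}_C(\varphi)\wedge\mathrm{FI}_C(\psi))\to\mathrm{FI}_C(\chi)$.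
   Context: $N=\{1,\dots,n\}$ is a finite set of agents, $\mathrm{Prop}$ a countable set of atoms. $\mathcal{L}_{\mathrm{CL}}$: $\varphi ::= p\mid\neg\varphi\mid(\varphi\wedge\psi)\mid[C]\varphi$; $\mathcal{L}_{\mathrm{CL}^{\mathrm{FI}}}$ additionally has $\mathrm{FI}_C(\varphi)$ for $C\subseteq N$ as a primitive modality. Coalition Logic $\mathrm{CL}$ (Pauly's axiomatization) over $\mathcal{L}_{\mathrm{CL}}$ has: all propositional tautologies; $(\bot)$ $\neg[C]\bot$; $(\top)$ $[C]\top$; $(N)$ $\neg[\emptyset]\neg\varphi\to[N]\varphi$; $(M)$ $[C](\varphi\wedge\psi)\to[C]\varphi$; $(S)$ $[C_1]\varphi_1\wedge[C_2]\varphi_2\to[C_1\cup C_2](\varphi_1\wedge\varphi_2)$ for $C_1\cap C_2=\emptyset$; rules modus ponens and (RE) from $\varphi\leftrightarrow\psi$ infer $[C]\varphi\leftrightarrow[C]\psi$. The system $\mathrm{CL}^{\mathrm{FI}}$ consists of all these axiom schemes and rules instantiated over $\mathcal{L}_{\mathrm{CL}^{\mathrm{FI}}}$, plus the axiom $(\mathrm{Def}\text{-}\mathrm{FI})$: $\mathrm{FI}_C(\varphi)\leftrightarrow(\neg[C]\varphi\wedge\neg[C]\neg\varphi)$. *)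

theory Defs
  imports Main
begin

text \<open>Agents are the elements of a finite type 'ag (so N = UNIV); atoms are natural numbers
(a countable set). A single datatype covers L_CL^FI; L_CL is its FI-free fragment.\<close>

datatype 'ag form =
    Atom nat
  | Neg "'ag form"
  | And "'ag form" "'ag form"
  | Coal "'ag set" "'ag form"
  | FI "'ag set" "'ag form"

fun fi_free :: "'ag form \<Rightarrow> bool" where
  "fi_free (Atom p) = True"
| "fi_free (Neg a) = fi_free a"
| "fi_free (And a b) = (fi_free a \<and> fi_free b)"
| "fi_free (Coal C a) = fi_free a"
| "fi_free (FI C a) = False"

definition Or :: "'ag form \<Rightarrow> 'ag form \<Rightarrow> 'ag form" where
  "Or a b = Neg (And (Neg a) (Neg b))"

definition Imp :: "'ag form \<Rightarrow> 'ag form \<Rightarrow> 'ag form" where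
  "Imp a b = Neg (And a (Neg b))"

definition Iff :: "'ag form \<Rightarrow> 'ag form \<Rightarrow> 'ag form" where
  "Iff a b = And (Imp a b) (Imp b a)"

definition Top :: "'ag form" where
  "Top = Neg (And (Atom 0) (Neg (Atom 0)))"

definition Bot :: "'ag form" where
  "Bot = Neg Top"

fun peval :: "('ag form \<Rightarrow> bool) \<Rightarrow> 'ag form \<Rightarrow> bool" where
  "peval v (Atom p) = v (Atom p)"
| "peval v (Neg a) = (\<not> peval v a)"
| "peval v (And a b) = (peval v a \<and> peval v b)"
| "peval v (Coal C a) = v (Coal C a)"
| "peval v (FI C a) = v (FI C a)"

definition tautology :: "'ag form \<Rightarrow> bool" where
  "tautology \<phi> = (\<forall>v. peval v \<phi>)"

inductive CL_prv :: "'ag form \<Rightarrow> bool" where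
  CL_taut: "fi_free \<phi> \<Longrightarrow> tautology \<phi> \<Longrightarrow> CL_prv \<phi>"
| CL_bot: "CL_prv (Neg (Coal C Bot))"
| CL_top: "CL_prv (Coal C Top)"
| CL_N: "fi_free \<phi> \<Longrightarrow> CL_prv (Imp (Neg (Coal {} (Neg \<phi>))) (Coal UNIV \<phi>))"
| CL_M: "fi_free \<phi> \<Longrightarrow> fi_free \<psi> \<Longrightarrow> CL_prv (Imp (Coal C (And \<phi> \<psi>)) (Coal C \<phi>))"
| CL_S: "fi_free \<phi>1 \<Longrightarrow> fi_free \<phi>2 \<Longrightarrow> C1 \<inter> C2 = {} \<Longrightarrow>
     CL_prv (Imp (And (Coal C1 \<phi>1) (Coal C2 \<phi>2)) (Coal (C1 \<union> C2) (And \<phi>1 \<phi>2)))"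
| CL_MP: "CL_prv \<phi> \<Longrightarrow> CL_prv (Imp \<phi> \<psi>) \<Longrightarrow> CL_prv \<psi>"
| CL_RE: "CL_prv (Iff \<phi> \<psi>) \<Longrightarrow> CL_prv (Iff (Coal C \<phi>) (Coal C \<psi>))"

inductive CLFI_prv :: "'ag form \<Rightarrow> bool" where
  FI_taut: "tautology \<phi> \<Longrightarrow> CLFI_prv \<phi>"
| FI_bot: "CLFI_prv (Neg (Coal C Bot))"
| FI_top: "CLFI_prv (Coal C Top)"
| FI_N: "CLFI_prv (Imp (Neg (Coal {} (Neg \<phi>))) (Coal UNIV \<phi>))"
| FI_M: "CLFI_prv (Imp (Coal C (And \<phi> \<psi>)) (Coal C \<phi>))"
| FI_S: "C1 \<inter> C2 = {} \<Longrightarrow>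
     CLFI_prv (Imp (And (Coal C1 \<phi>1) (Coal C2 \<phi>2)) (Coal (C1 \<union> C2) (And \<phi>1 \<phi>2)))"
| FI_MP: "CLFI_prv \<phi> \<Longrightarrow> CLFI_prv (Imp \<phi> \<psi>) \<Longrightarrow> CLFI_prv \<psi>"
| FI_RE: "CLFI_prv (Iff \<phi> \<psi>) \<Longrightarrow> CLFI_prv (Iff (Coal C \<phi>) (Coal C \<psi>))"
| FI_Def: "CLFI_prv (Iff (FI C \<phi>) (And (Neg (Coal C \<phi>)) (Neg (Coal C (Neg \<phi>)))))"

end

theory Submission
  imports Defs
begin

lemmas pdefs = tautology_def Imp_def Iff_def Or_def Top_def Bot_def

lemma mp1: "tautology (Imp a b) \<Longrightarrow> CLFI_prv a \<Longrightarrow> CLFI_prv b"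
  by (meson FI_MP FI_taut)

lemma mp2: "tautology (Imp a (Imp b c)) \<Longrightarrow> CLFI_prv a \<Longrightarrow> CLFI_prv b \<Longrightarrow> CLFI_prv c"
  by (meson FI_MP FI_taut)

lemma mp3: "tautology (Imp a (Imp b (Imp c d))) \<Longrightarrow> CLFI_prv a \<Longrightarrow> CLFI_prv b \<Longrightarrow> CLFI_prv c \<Longrightarrow> CLFI_prv d"
  by (meson FI_MP FI_taut)

lemma mp4: "tautology (Imp a (Imp b (Imp c (Imp d e)))) \<Longrightarrow> CLFI_prv a \<Longrightarrow> CLFI_prv b \<Longrightarrow> CLFI_prv c \<Longrightarrow> CLFI_prv d \<Longrightarrow> CLFI_prv e"
  by (meson FI_MP FI_taut)

lemma cl_fi: "CL_prv \<phi> \<Longrightarrow> CLFI_prv \<phi>"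
  by (induction rule: CL_prv.induct) (auto intro: CLFI_prv.intros)

lemma mono_rule: assumes "CLFI_prv (Imp a b)" shows "CLFI_prv (Imp (Coal C a) (Coal C b))"
proof -
  have "CLFI_prv (Iff a (And b a))"
    by (rule mp1[OF _ assms]) (auto simp: pdefs)
  hence "CLFI_prv (Iff (Coal C a) (Coal C (And b a)))" by (rule FI_RE)
  moreover have "CLFI_prv (Imp (Coal C (And b a)) (Coal C b))" by (rule FI_M)
  ultimately show ?thesis by (rule mp2[rotated]) (auto simp: pdefs)
qed

lemma mono_coal: assumes "C \<subseteq> D" shows "CLFI_prv (Imp (Coal C a) (Coal D a))"
proof -
  have e: "C \<union> (D - C) = D" using assms by blast
  have s: "CLFI_prv (Imp (And (Coal C a) (Coal (D - C) Top)) (Coal D (And a Top)))"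
    using FI_S[of C "D - C" a Top] e by simp
  have "CLFI_prv (Iff (And a Top) a)" by (rule FI_taut) (auto simp: pdefs)
  hence r: "CLFI_prv (Iff (Coal D (And a Top)) (Coal D a))" by (rule FI_RE)
  show ?thesis using mp3[OF _ s r FI_top[of "D - C"]] by (auto simp: pdefs)
qed

theorem mainTheorem16:
  shows "(\<forall>(C::'ag::finite set) \<phi>. CLFI_prv (Iff (FI C \<phi>) (FI C (Neg \<phi>))))
    \<and> (\<forall>(C::'ag set) D \<phi>. C \<subseteq> D \<longrightarrow> CLFI_prv (Imp (FI D \<phi>) (FI C \<phi>)))
    \<and> (\<forall>\<phi>::'ag form. fi_free \<phi> \<longrightarrow> CL_prv (Or (Coal UNIV \<phi>) (Coal UNIV (Neg \<phi>)))
          \<longrightarrow> CLFI_prv (Neg (FI UNIV \<phi>)))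
    \<and> (\<forall>(C::'ag set) \<phi> \<chi> \<psi>. CLFI_prv (Imp \<phi> \<chi>) \<longrightarrow> CLFI_prv (Imp \<chi> \<psi>)
          \<longrightarrow> CLFI_prv (Imp (And (FI C \<phi>) (FI C \<psi>)) (FI C \<chi>)))"
proof (intro conjI allI impI)
  fix C :: "'ag set" and \<phi> :: "'ag form"
  have "CLFI_prv (Iff (Neg (Neg \<phi>)) \<phi>)" by (rule FI_taut) (auto simp: pdefs)
  hence r: "CLFI_prv (Iff (Coal C (Neg (Neg \<phi>))) (Coal C \<phi>))" by (rule FI_RE)
  show "CLFI_prv (Iff (FI C \<phi>) (FI C (Neg \<phi>)))"
    by (rule mp3[OF _ FI_Def[of C \<phi>] FI_Def[of C "Neg \<phi>"] r]) (auto simp: pdefs)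
next
  fix C D :: "'ag set" and \<phi> :: "'ag form"
  assume "C \<subseteq> D"
  note m1 = mono_coal[OF this, of \<phi>] and m2 = mono_coal[OF this, of "Neg \<phi>"]
  show "CLFI_prv (Imp (FI D \<phi>) (FI C \<phi>))"
    by (rule mp4[OF _ FI_Def[of C \<phi>] FI_Def[of D \<phi>] m1 m2]) (auto simp: pdefs)
next
  fix \<phi> :: "'ag form"
  assume "CL_prv (Or (Coal UNIV \<phi>) (Coal UNIV (Neg \<phi>)))"
  hence h: "CLFI_prv (Or (Coal UNIV \<phi>) (Coal UNIV (Neg \<phi>)))" by (rule cl_fi)
  show "CLFI_prv (Neg (FI UNIV \<phi>))"
    by (rule mp2[OF _ FI_Def[of UNIV \<phi>] h]) (auto simp: pdefs)
next
  fix C :: "'ag set" and \<phi> \<chi> \<psi> :: "'ag form"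
  assume a: "CLFI_prv (Imp \<phi> \<chi>)" "CLFI_prv (Imp \<chi> \<psi>)"
  have "CLFI_prv (Imp (Neg \<chi>) (Neg \<phi>))" by (rule mp1[OF _ a(1)]) (auto simp: pdefs)
  note m1 = mono_rule[OF this, of C] and m2 = mono_rule[OF a(2), of C]
  have t: "CLFI_prv (Imp (And (FI C \<phi>) (FI C \<psi>)) (And (Neg (Coal C \<chi>)) (Neg (Coal C (Neg \<chi>)))))"
    by (rule mp4[OF _ FI_Def[of C \<phi>] FI_Def[of C \<psi>] m1 m2]) (auto simp: pdefs)
  show "CLFI_prv (Imp (And (FI C \<phi>) (FI C \<psi>)) (FI C \<chi>))"
    by (rule mp2[OF _ t FI_Def[of C \<chi>]]) (auto simp: pdefs)
qed

end
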